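(* Let $x>0$ and $t>0$ be real numbers. For $n\in\mathbb{N}$ and $\omega=\omega_1\cdots\omega_n\in\{-1,1\}^n$ define, for $0\le k\le n$, \[ S_k(\omega):=x+\frac{\sqrt{t}}{\sqrt{n}}\sum_{i=1}^k\omega_i \] (so $S_0(\omega)=x$; note the normalisation is $\sqrt{n}$, not $\sqrt{k}$). Let $A_n:=\{\omega\in\{-1,1\}^n:\ S_k(\omega)>0 \text{ for all } 1\le k\le n\}$, and equip $A_n$ with the uniform probability measure $\mathbb{P}_n$; this is a fair coin tossed exactly $n$ times, conditioned on the walk $S_k$ staying strictly positive. Then for all extended real numbers $a<b$ with $(a,b)\subset[0,\infty]$, \[ \lim_{n\to\infty}\mathbb{P}_n\big(a\le S_n\le b\big)=\frac{\int_a^b H(t,x,y)\,dy}{\int_0^\infty H(t,x,y)\,dy}, \] where $H(t,x,y):=G(t,x,y)-G(t,x,-y)$ and $G(t,x,y):=\frac{1}{\sqrt{2\pi t}}\exp\!\big(-\frac{(y-x)^2}{2t}\big)$.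
   Context: Here $1$ stands for heads and $-1$ for tails. $\mathbb{P}_n(a\le S_n\le b)=|\{\omega\in A_n: a\le S_n(\omega)\le b\}|/|A_n|$ (note $A_n\neq\emptyset$ since the all-heads sequence lies in $A_n$). *)

theory Defs
  imports "HOL-Analysis.Analysis"
begin

definition G :: "real \<Rightarrow> real \<Rightarrow> real \<Rightarrow> real" where
  "G t x y = 1 / sqrt (2 * pi * t) * exp (- ((y - x)^2) / (2 * t))"

definition H :: "real \<Rightarrow> real \<Rightarrow> real \<Rightarrow> real" where
  "H t x y = G t x y - G t x (- y)"

definition coin_seqs :: "nat \<Rightarrow> int list set" where
  "coin_seqs n = {\<omega>. length \<omega> = n \<and> set \<omega> \<subseteq> {-1, 1}}"

text \<open>S_k(omega) = x + sqrt t / sqrt n * sum_{i=1}^k omega_i (list index i-1).\<close>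
definition walk :: "real \<Rightarrow> real \<Rightarrow> nat \<Rightarrow> int list \<Rightarrow> nat \<Rightarrow> real" where
  "walk x t n \<omega> k = x + sqrt t / sqrt (real n) * (\<Sum>i<k. real_of_int (\<omega> ! i))"

definition A_set :: "real \<Rightarrow> real \<Rightarrow> nat \<Rightarrow> int list set" where
  "A_set x t n = {\<omega> \<in> coin_seqs n. \<forall>k\<in>{1..n}. walk x t n \<omega> k > 0}"

definition Pn :: "real \<Rightarrow> real \<Rightarrow> nat \<Rightarrow> ereal \<Rightarrow> ereal \<Rightarrow> real" where
  "Pn x t n a b =
     real (card {\<omega> \<in> A_set x t n. a \<le> ereal (walk x t n \<omega> n) \<and> ereal (walk x t n \<omega> n) \<le> b})
     / real (card (A_set x t n))"

end

theory Submission
  imports Defs "HOL-Probability.Probability" "HOL-Real_Asymp.Real_Asymp"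
begin


lemma finite_coin: "finite (coin_seqs n)"
proof -
  have "coin_seqs n = {xs. set xs \<subseteq> {-1,1} \<and> length xs = n}" by (auto simp: coin_seqs_def)
  then show ?thesis using finite_lists_length_eq[of "{-1,1::int}" n] by simp
qed

lemma coin_0: "coin_seqs 0 = {[]}" by (auto simp: coin_seqs_def)

lemma coin_Suc: "coin_seqs (Suc n) = Cons 1 ` coin_seqs n \<union> Cons (-1) ` coin_seqs n"
proof (rule set_eqI)
  fix w show "w \<in> coin_seqs (Suc n) \<longleftrightarrow> w \<in> Cons 1 ` coin_seqs n \<union> Cons (-1) ` coin_seqs n"
    by (cases w) (auto simp: coin_seqs_def)
qed

lemma card_split: "card {w\<in>coin_seqs (Suc n). P w} =
   card {w\<in>coin_seqs n. P (1#w)} + card {w\<in>coin_seqs n. P (-1#w)}"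
proof -
  have "{w\<in>coin_seqs (Suc n). P w} = Cons 1 ` {w\<in>coin_seqs n. P (1#w)} \<union> Cons (-1) ` {w\<in>coin_seqs n. P (-1#w)}"
    unfolding coin_Suc by auto
  moreover have "card (Cons 1 ` {w\<in>coin_seqs n. P (1#w)} \<union> Cons (-1) ` {w\<in>coin_seqs n. P (-1#w)})
     = card (Cons 1 ` {w\<in>coin_seqs n. P (1#w)}) + card (Cons (-1) ` {w\<in>coin_seqs n. P (-1#w)})"
    by (rule card_Un_disjoint) (auto simp: finite_coin)
  moreover have "card (Cons (c::int) ` {w\<in>coin_seqs n. P (c#w)}) = card {w\<in>coin_seqs n. P (c#w)}" for c
    by (rule card_image) auto
  ultimately show ?thesis by simp
qed

lemma sum_split: "sum f (coin_seqs (Suc n)) =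
   sum (\<lambda>w. f (1#w)) (coin_seqs n) + sum (\<lambda>w. f (-1#w)) (coin_seqs n)"
proof -
  have "sum f (coin_seqs (Suc n)) = sum f (Cons 1 ` coin_seqs n) + sum f (Cons (-1) ` coin_seqs n)"
    unfolding coin_Suc by (rule sum.union_disjoint) (auto simp: finite_coin)
  moreover have "sum f (Cons (c::int) ` coin_seqs n) = sum (\<lambda>w. f (c#w)) (coin_seqs n)" for c
    by (subst sum.reindex) auto
  ultimately show ?thesis by simp
qed

lemma sum_prod_coin:
  fixes g :: "int \<Rightarrow> 'a::comm_ring_1"
  shows "(\<Sum>w\<in>coin_seqs n. prod_list (map g w)) = (g 1 + g (-1)) ^ n"
  by (induction n) (simp_all add: coin_0 sum_split sum_distrib_left[symmetric] algebra_simps)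

lemma card_coin: "card (coin_seqs n) = 2 ^ n"
proof -
  have "prod_list (map (\<lambda>_. 1::real) w) = 1" for w :: "int list" by (induction w) auto
  then have "real (card (coin_seqs n)) = (\<Sum>w\<in>coin_seqs n. prod_list (map (\<lambda>_. 1::real) w))"
    by simp
  also have "\<dots> = 2 ^ n" by (subst sum_prod_coin) simp
  finally show ?thesis by (metis of_nat_eq_of_nat_power_cancel_iff of_nat_numeral)
qed

lemma sum_list_neg: "sum_list (map uminus w) = - sum_list (w::int list)"
  by (induction w) auto

lemma map_uminus_coin: "w \<in> coin_seqs n \<Longrightarrow> map uminus w \<in> coin_seqs n"
proof -
  assume w: "w \<in> coin_seqs n"
  have "uminus ` set w \<subseteq> uminus ` {-1, 1::int}" using w by (intro image_mono) (simp add: coin_seqs_def)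
  moreover have "uminus ` {-1, 1::int} = {-1,1}" by auto
  ultimately show ?thesis using w by (simp add: coin_seqs_def)
qed

lemma coin_sym: "card {w\<in>coin_seqs n. P (sum_list w)} = card {w\<in>coin_seqs n. P (- sum_list w)}"
proof -
  have "map uminus ` {w\<in>coin_seqs n. P (- sum_list w)} = {w\<in>coin_seqs n. P (sum_list w)}"
  proof (rule set_eqI, rule iffI)
    fix w assume "w \<in> map uminus ` {w\<in>coin_seqs n. P (- sum_list w)}"
    then obtain v where "w = map uminus v" "v \<in> coin_seqs n" "P (- sum_list v)" by (auto simp del: map_eq_conv)
    then show "w \<in> {w\<in>coin_seqs n. P (sum_list w)}"
      using map_uminus_coin by (simp add: sum_list_neg)
  next
    fix w assume w: "w \<in> {w\<in>coin_seqs n. P (sum_list w)}"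
    then have "map uminus w \<in> {w\<in>coin_seqs n. P (- sum_list w)}"
      using map_uminus_coin by (simp add: sum_list_neg)
    moreover have "w = map uminus (map uminus w)" by (induction w) auto
    ultimately show "w \<in> map uminus ` {w\<in>coin_seqs n. P (- sum_list w)}" by (rule rev_image_eqI)
  qed
  moreover have "inj_on (map (uminus::int\<Rightarrow>int)) X" for X
  proof (rule inj_on_inverseI[where g="map uminus"])
    fix w :: "int list" show "map uminus (map uminus w) = w" by (induction w) auto
  qed
  ultimately show ?thesis using card_image[of "map uminus" "{w\<in>coin_seqs n. P (- sum_list w)}"] by simp
qed

fun stays :: "int \<Rightarrow> int \<Rightarrow> int list \<Rightarrow> bool" where
  "stays L p [] = True"
| "stays L p (e#w) = (p + e > -L \<and> stays L (p+e) w)"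

lemma reflection:
  assumes Q: "\<And>j. Q j \<Longrightarrow> j > -L" and p: "p > -L"
  shows "card {w\<in>coin_seqs n. stays L p w \<and> Q (p + sum_list w)}
       + card {w\<in>coin_seqs n. Q (-2*L - (p + sum_list w))}
       = card {w\<in>coin_seqs n. Q (p + sum_list w)}"
  using p
proof (induction n arbitrary: p)
  case 0
  have "\<not> Q (-2*L - p)" using Q[of "-2*L-p"] 0 by auto
  have e: "{w. w = [] \<and> R w} = (if R [] then {[]} else {})" for R :: "int list \<Rightarrow> bool" by auto
  show ?case using \<open>\<not> Q (-2*L - p)\<close> by (simp add: coin_0 e)
next
  case (Suc n)
  have IH1: "card {w\<in>coin_seqs n. stays L (p+1) w \<and> Q (p + 1 + sum_list w)}
       + card {w\<in>coin_seqs n. Q (-2*L - (p + 1 + sum_list w))}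
       = card {w\<in>coin_seqs n. Q (p + 1 + sum_list w)}"
    using Suc.IH[of "p+1"] Suc.prems by simp
  have second: "card {w\<in>coin_seqs n. p - 1 > -L \<and> stays L (p-1) w \<and> Q (p - 1 + sum_list w)}
       + card {w\<in>coin_seqs n. Q (-2*L - (p - 1 + sum_list w))}
       = card {w\<in>coin_seqs n. Q (p - 1 + sum_list w)}"
  proof (cases "p - 1 > -L")
    case True
    then show ?thesis using Suc.IH[of "p-1"] by simp
  next
    case False
    then have pL: "p - 1 = -L" using Suc.prems by simp
    have "card {w\<in>coin_seqs n. Q (-2*L - (p - 1 + sum_list w))} = card {w\<in>coin_seqs n. Q (-L - sum_list w)}"
    proof -
      have eq: "\<And>s. -2*L - (p - 1 + s) = -L - s" using pL by simp
      show ?thesis by (simp only: eq)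
    qed
    also have "\<dots> = card {w\<in>coin_seqs n. Q (-L + sum_list w)}"
      using coin_sym[of n "\<lambda>s. Q (-L - s)"] by simp
    finally show ?thesis using False pL by simp
  qed
  have e1: "card {w\<in>coin_seqs (Suc n). stays L p w \<and> Q (p + sum_list w)}
     = card {w\<in>coin_seqs n. stays L (p+1) w \<and> Q (p + 1 + sum_list w)}
      + card {w\<in>coin_seqs n. p - 1 > -L \<and> stays L (p-1) w \<and> Q (p - 1 + sum_list w)}"
    using Suc.prems by (subst card_split) (simp add: algebra_simps)
  have e2: "card {w\<in>coin_seqs (Suc n). Q (-2*L - (p + sum_list w))}
     = card {w\<in>coin_seqs n. Q (-2*L - (p + 1 + sum_list w))} + card {w\<in>coin_seqs n. Q (-2*L - (p - 1 + sum_list w))}"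
    by (subst card_split) (simp add: algebra_simps)
  have e3: "card {w\<in>coin_seqs (Suc n). Q (p + sum_list w)}
     = card {w\<in>coin_seqs n. Q (p + 1 + sum_list w)} + card {w\<in>coin_seqs n. Q (p - 1 + sum_list w)}"
    by (subst card_split) (simp add: algebra_simps)
  show ?case using e1 e2 e3 IH1 second by simp
qed

lemma stays_iff: "stays L p w \<longleftrightarrow> (\<forall>k. 1 \<le> k \<longrightarrow> k \<le> length w \<longrightarrow> p + sum_list (take k w) > -L)"
proof (induction w arbitrary: p)
  case Nil then show ?case by simp
next
  case (Cons e w)
  show ?case
  proof
    assume "stays L p (e#w)"
    then have h: "p + e > -L" "\<forall>k. 1 \<le> k \<longrightarrow> k \<le> length w \<longrightarrow> p + e + sum_list (take k w) > -L"
      using Cons.IH[of "p+e"] by auto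
    show "\<forall>k. 1 \<le> k \<longrightarrow> k \<le> length (e#w) \<longrightarrow> p + sum_list (take k (e#w)) > -L"
    proof (intro allI impI)
      fix k assume k: "1 \<le> k" "k \<le> length (e#w)"
      show "p + sum_list (take k (e#w)) > -L"
      proof (cases "k = 1")
        case True then show ?thesis using h by simp
      next
        case False
        then obtain j where "k = Suc j" "1 \<le> j" "j \<le> length w" using k by (cases k) auto
        then show ?thesis using h(2) by (simp add: add.assoc)
      qed
    qed
  next
    assume h: "\<forall>k. 1 \<le> k \<longrightarrow> k \<le> length (e#w) \<longrightarrow> p + sum_list (take k (e#w)) > -L"
    have "p + e > -L" using h[rule_format, of 1] by simp
    moreover have "\<forall>k. 1 \<le> k \<longrightarrow> k \<le> length w \<longrightarrow> p + e + sum_list (take k w) > -L"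
    proof (intro allI impI)
      fix k assume "1 \<le> k" "k \<le> length w"
      then show "p + e + sum_list (take k w) > -L" using h[rule_format, of "Suc k"] by (simp add: add.assoc)
    qed
    ultimately show "stays L p (e#w)" using Cons.IH[of "p+e"] by simp
  qed
qed


definition nu :: "nat \<Rightarrow> real \<Rightarrow> real measure" where
  "nu n e = distr (measure_pmf (pmf_of_set (coin_seqs n))) borel
      (\<lambda>w. real_of_int (sum_list w) / sqrt (real n) + e)"

lemma coin_ne: "coin_seqs n \<noteq> {}"
  using card_coin[of n] by auto

lemma real_distribution_nu: "real_distribution (nu n e)"
  unfolding nu_def
  by (rule prob_space.real_distribution_distr) (auto simp: prob_space_measure_pmf)

lemma measure_nu: "measure (nu n e) A =
   real (card {w\<in>coin_seqs n. real_of_int (sum_list w) / sqrt (real n) + e \<in> A}) / 2 ^ n"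
  if "A \<in> sets borel"
proof -
  have "measure (nu n e) A = measure (measure_pmf (pmf_of_set (coin_seqs n)))
      ((\<lambda>w. real_of_int (sum_list w) / sqrt (real n) + e) -` A)"
    unfolding nu_def using that by (subst measure_distr) auto
  also have "\<dots> = real (card (coin_seqs n \<inter> (\<lambda>w. real_of_int (sum_list w) / sqrt (real n) + e) -` A)) / real (card (coin_seqs n))"
    by (rule measure_pmf_of_set[OF coin_ne finite_coin])
  also have "coin_seqs n \<inter> (\<lambda>w. real_of_int (sum_list w) / sqrt (real n) + e) -` A
     = {w\<in>coin_seqs n. real_of_int (sum_list w) / sqrt (real n) + e \<in> A}" by auto
  finally show ?thesis by (simp add: card_coin)
qed

lemma exp_sum_list: "exp (c * of_int (sum_list w)) = prod_list (map (\<lambda>y. exp (c * of_int y)) w)"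
  for c :: complex
  by (induction w) (auto simp: distrib_left exp_add)

lemma char_nu: "char (nu n e) u = iexp (u * e) * complex_of_real (cos (u / sqrt (real n)) ^ n)"
proof -
  let ?f = "\<lambda>w. real_of_int (sum_list w) / sqrt (real n) + e"
  let ?c = "\<i> * complex_of_real (u / sqrt (real n))"
  have "char (nu n e) u = (CLINT w | measure_pmf (pmf_of_set (coin_seqs n)). iexp (u * ?f w))"
    unfolding char_def nu_def by (subst integral_distr) auto
  also have "\<dots> = (\<Sum>w\<in>coin_seqs n. iexp (u * ?f w)) / of_nat (card (coin_seqs n))"
    by (subst integral_measure_pmf[of "coin_seqs n"])
       (auto simp: finite_coin coin_ne sum_divide_distrib scaleR_conv_of_real)
  also have "(\<Sum>w\<in>coin_seqs n. iexp (u * ?f w)) = iexp (u * e) * (\<Sum>w\<in>coin_seqs n. prod_list (map (\<lambda>y. exp (?c * of_int y)) w))"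
  proof -
    have "iexp (u * ?f w) = iexp (u * e) * exp (?c * of_int (sum_list w))" for w
      by (simp add: distrib_left exp_add[symmetric] algebra_simps)
    also have "\<dots> w = iexp (u * e) * prod_list (map (\<lambda>y. exp (?c * of_int y)) w)" for w
      by (simp only: exp_sum_list)
    finally show ?thesis by (simp only: sum_distrib_left)
  qed
  also have "(\<Sum>w\<in>coin_seqs n. prod_list (map (\<lambda>y. exp (?c * of_int y)) w)) = (exp ?c + exp (- ?c)) ^ n"
    by (subst sum_prod_coin) simp
  also have "exp ?c + exp (- ?c) = 2 * complex_of_real (cos (u / sqrt (real n)))"
    by (simp add: cos_exp_eq cos_of_real[symmetric] del: cos_of_real)
  finally show ?thesis by (simp add: card_coin power_mult_distrib)
qed

lemma cos_limit: "(\<lambda>n. cos (u / sqrt (real n)) ^ n) \<longlonglongrightarrow> exp (-(u^2)/2)"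
proof -
  have "(\<lambda>n. cos (u / sqrt (real n)) ^ n) \<longlonglongrightarrow> exp (-(u*u)/2)" by real_asymp
  then show ?thesis by (simp add: power2_eq_square)
qed

lemma weak_conv_nu:
  assumes "e \<longlonglongrightarrow> 0"
  shows "weak_conv_m (\<lambda>n. nu n (e n)) std_normal_distribution"
proof (rule levy_continuity)
  show "real_distribution (nu n (e n))" for n by (rule real_distribution_nu)
  show "real_distribution std_normal_distribution" by (rule real_dist_normal_dist)
  fix u
  have "(\<lambda>n. iexp (u * e n)) \<longlonglongrightarrow> iexp (u * 0)"
    by (intro tendsto_intros assms)
  moreover have "(\<lambda>n. complex_of_real (cos (u / sqrt (real n)) ^ n)) \<longlonglongrightarrow> complex_of_real (exp (-(u^2)/2))"
    by (intro tendsto_of_real cos_limit)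
  ultimately have "(\<lambda>n. iexp (u * e n) * complex_of_real (cos (u / sqrt (real n)) ^ n)) \<longlonglongrightarrow> iexp (u * 0) * complex_of_real (exp (-(u^2)/2))"
    by (rule tendsto_mult)
  then show "(\<lambda>n. char (nu n (e n)) u) \<longlonglongrightarrow> char std_normal_distribution u"
    by (simp add: char_nu char_std_normal_distribution)
qed


definition Aset :: "real \<Rightarrow> real \<Rightarrow> ereal \<Rightarrow> ereal \<Rightarrow> real set" where
  "Aset u v a b = {z. a \<le> ereal (u + v * z) \<and> ereal (u + v * z) \<le> b \<and> 0 < u + v * z}"

lemma Aset_borel: "Aset u v a b \<in> sets borel"
  unfolding Aset_def by measurable

lemma std_normal_finite_null:
  assumes "finite F" shows "emeasure std_normal_distribution F = 0"
proof -
  have "F \<in> null_sets lborel" using assms by (intro countable_imp_null_set_lborel countable_finite)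
  then have "AE x in lborel. x \<notin> F" by (rule AE_not_in)
  then have "F \<in> null_sets (density lborel std_normal_density)"
    using \<open>F \<in> null_sets lborel\<close> by (subst null_sets_density_iff) (auto elim: AE_mp)
  then show ?thesis by auto
qed

lemma frontier_sub:
  assumes "Op \<subseteq> A" "A \<subseteq> Cl" "open Op" "closed Cl"
  shows "frontier A \<subseteq> Cl - Op"
proof -
  have "closure A \<subseteq> Cl" using assms by (intro closure_minimal)
  moreover have "Op \<subseteq> interior A" using assms by (intro interior_maximal)
  ultimately show ?thesis unfolding frontier_def by auto
qed

lemma Aset_frontier:
  assumes v: "v \<noteq> 0"
  shows "emeasure std_normal_distribution (frontier (Aset u v a b)) = 0"
proof -
  let ?g = "\<lambda>z. u + v * z"
  define Op where "Op = {z. a < ereal (?g z) \<and> ereal (?g z) < b \<and> 0 < ?g z}"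
  define Cl where "Cl = {z. a \<le> ereal (?g z) \<and> ereal (?g z) \<le> b \<and> 0 \<le> ?g z}"
  have "open Op" unfolding Op_def
    by (intro open_Collect_conj open_Collect_less continuous_intros)
  moreover have "closed Cl" unfolding Cl_def
    by (intro closed_Collect_conj closed_Collect_le continuous_intros)
  ultimately have fr: "frontier (Aset u v a b) \<subseteq> Cl - Op"
    by (intro frontier_sub) (auto simp: Op_def Cl_def Aset_def)
  define F where "F = {(real_of_ereal a - u) / v, (real_of_ereal b - u) / v, - u / v}"
  have "Cl - Op \<subseteq> F"
  proof
    fix z assume z: "z \<in> Cl - Op"
    then have "ereal (?g z) = a \<or> ereal (?g z) = b \<or> ?g z = 0"
      unfolding Cl_def Op_def by auto
    then have "?g z = real_of_ereal a \<or> ?g z = real_of_ereal b \<or> ?g z = 0" by force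
    then show "z \<in> F" unfolding F_def using v by (auto simp: field_simps)
  qed
  with fr have "frontier (Aset u v a b) \<subseteq> F" by auto
  moreover have "emeasure std_normal_distribution F = 0"
    by (rule std_normal_finite_null) (simp add: F_def)
  moreover have "F \<in> sets std_normal_distribution"
    by (simp add: F_def finite_imp_closed borel_closed)
  ultimately have "emeasure std_normal_distribution (frontier (Aset u v a b)) \<le> 0"
    using emeasure_mono by metis
  then show ?thesis by simp
qed


lemma measure_density_int:
  assumes g: "integrable lborel g" "\<And>y. g y \<ge> 0" and J: "J \<in> sets borel"
  shows "measure (density lborel (\<lambda>y. ennreal (g y))) J = (LINT y:J|lborel. g y)"
proof -
  have gm[measurable]: "g \<in> borel_measurable borel" using g(1) by auto
  have int: "integrable lborel (\<lambda>y. g y * indicator J y)"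
    using integrable_mult_indicator[of J lborel g] g(1) J by (simp add: mult.commute)
  have "emeasure (density lborel (\<lambda>y. ennreal (g y))) J = (\<integral>\<^sup>+ y. ennreal (g y) * indicator J y \<partial>lborel)"
    using J by (subst emeasure_density) auto
  also have "\<dots> = (\<integral>\<^sup>+ y. ennreal (g y * indicator J y) \<partial>lborel)"
    by (intro nn_integral_cong) (auto split: split_indicator)
  also have "\<dots> = ennreal (\<integral> y. g y * indicator J y \<partial>lborel)"
    using int g(2) by (intro nn_integral_eq_integral) auto
  finally have "measure (density lborel (\<lambda>y. ennreal (g y))) J = (\<integral> y. g y * indicator J y \<partial>lborel)"
    unfolding measure_def using g(2) by (simp add: integral_nonneg_AE)
  then show ?thesis by (simp add: set_lebesgue_integral_def mult.commute)
qed

lemma std_aff: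
  assumes v: "v \<noteq> 0" and J: "J \<in> sets borel"
  shows "measure std_normal_distribution {z. u + v * z \<in> J} = (LINT y:J|lborel. normal_density u (abs v) y)"
proof -
  interpret prob_space std_normal_distribution
    using real_dist_normal_dist real_distribution.axioms(1) by blast
  have d: "distributed std_normal_distribution lborel (\<lambda>z. z) std_normal_density"
    unfolding distributed_def
    by (auto simp: distr_id2)
  have "distributed std_normal_distribution lborel (\<lambda>z. u + v * z) (normal_density (u + v * 0) (\<bar>v\<bar> * 1))"
    by (rule normal_density_affine[OF d]) (use v in auto)
  then have e: "distr std_normal_distribution lborel (\<lambda>z. u + v * z) = density lborel (normal_density u (abs v))"
    unfolding distributed_def by simp
  have "measure std_normal_distribution {z. u + v * z \<in> J} = measure (distr std_normal_distribution lborel (\<lambda>z. u + v * z)) J"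
    using J by (subst measure_distr) (auto simp: vimage_def Collect_conj_eq)
  also have "\<dots> = (LINT y:J|lborel. normal_density u (abs v) y)"
    unfolding e using J v by (intro measure_density_int) auto
  finally show ?thesis .
qed


definition LL :: "real \<Rightarrow> real \<Rightarrow> nat \<Rightarrow> int" where
  "LL x t n = \<lceil>x * sqrt (real n) / sqrt t\<rceil>"

definition ee :: "real \<Rightarrow> real \<Rightarrow> nat \<Rightarrow> real" where
  "ee x t n = 2 * (sqrt t / sqrt (real n) * of_int (LL x t n) - x) / sqrt t"

definition FF :: "real \<Rightarrow> real \<Rightarrow> nat \<Rightarrow> ereal \<Rightarrow> ereal \<Rightarrow> real" where
  "FF x t n a b = measure (nu n 0) (Aset x (sqrt t) a b) - measure (nu n (ee x t n)) (Aset (-x) (- sqrt t) a b)"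

context
  fixes x t :: real and n :: nat
  assumes x: "x > 0" and t: "t > 0" and n: "n \<ge> 1"
begin

lemma pos_iff: "x + sqrt t / sqrt (real n) * of_int s > 0 \<longleftrightarrow> s > - LL x t n"
proof -
  have h: "sqrt t / sqrt (real n) > 0" using t n by simp
  have "x + sqrt t / sqrt (real n) * of_int s > 0 \<longleftrightarrow> of_int (-s) < x * sqrt (real n) / sqrt t"
    using h t n by (simp add: field_simps) linarith
  also have "\<dots> \<longleftrightarrow> -s < LL x t n" unfolding LL_def by (rule less_ceiling_iff[symmetric])
  finally show ?thesis by linarith
qed

lemma LL_pos: "LL x t n > 0"
  unfolding LL_def using x t n by simp

lemma sum_take: "k \<le> length w \<Longrightarrow> (\<Sum>i<k. real_of_int (w ! i)) = real_of_int (sum_list (take k w))"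
proof -
  assume k: "k \<le> length w"
  have "sum_list (take k w) = (\<Sum>i = 0..<length (take k w). take k w ! i)" by (rule sum_list_sum_nth)
  also have "\<dots> = (\<Sum>i<k. w ! i)" using k by (simp add: atLeast0LessThan)
  finally show ?thesis by simp
qed

lemma walk_eq: "k \<le> length w \<Longrightarrow> walk x t n w k = x + sqrt t / sqrt (real n) * of_int (sum_list (take k w))"
  unfolding walk_def by (simp add: sum_take)

lemma A_eq: "A_set x t n = {w\<in>coin_seqs n. stays (LL x t n) 0 w}"
proof -
  have "w \<in> coin_seqs n \<Longrightarrow> (\<forall>k\<in>{1..n}. walk x t n w k > 0) \<longleftrightarrow> stays (LL x t n) 0 w" for w
  proof -
    assume w: "w \<in> coin_seqs n"
    then have len: "length w = n" by (simp add: coin_seqs_def)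
    have "k \<in> {1..n} \<Longrightarrow> walk x t n w k > 0 \<longleftrightarrow> 0 + sum_list (take k w) > - LL x t n" for k
      using len walk_eq[of k w] pos_iff[of "sum_list (take k w)"] by simp
    then show ?thesis unfolding stays_iff len by auto
  qed
  then show ?thesis unfolding A_set_def by auto
qed

definition Qp :: "ereal \<Rightarrow> ereal \<Rightarrow> int \<Rightarrow> bool" where
  "Qp a b s = (a \<le> ereal (x + sqrt t / sqrt (real n) * of_int s) \<and> ereal (x + sqrt t / sqrt (real n) * of_int s) \<le> b \<and> s > - LL x t n)"

lemma num_eq: "{w\<in>A_set x t n. a \<le> ereal (walk x t n w n) \<and> ereal (walk x t n w n) \<le> b}
   = {w\<in>coin_seqs n. stays (LL x t n) 0 w \<and> Qp a b (0 + sum_list w)}"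
proof -
  have "w \<in> coin_seqs n \<Longrightarrow> stays (LL x t n) 0 w \<Longrightarrow> sum_list w > - LL x t n" for w
  proof -
    assume "w \<in> coin_seqs n" "stays (LL x t n) 0 w"
    then have "length w = n" "\<forall>k. 1 \<le> k \<longrightarrow> k \<le> length w \<longrightarrow> 0 + sum_list (take k w) > - LL x t n"
      by (auto simp: coin_seqs_def stays_iff)
    then show ?thesis using n by (metis take_all order_refl add_0)
  qed
  moreover have "w \<in> coin_seqs n \<Longrightarrow> walk x t n w n = x + sqrt t / sqrt (real n) * of_int (sum_list w)" for w
    by (simp add: walk_eq coin_seqs_def)
  ultimately show ?thesis unfolding A_eq Qp_def by auto
qed

lemma card_num: "real (card {w\<in>A_set x t n. a \<le> ereal (walk x t n w n) \<and> ereal (walk x t n w n) \<le> b})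
  = real (card {w\<in>coin_seqs n. Qp a b (sum_list w)}) - real (card {w\<in>coin_seqs n. Qp a b (-2 * LL x t n - sum_list w)})"
proof -
  have "card {w\<in>coin_seqs n. stays (LL x t n) 0 w \<and> Qp a b (0 + sum_list w)}
       + card {w\<in>coin_seqs n. Qp a b (-2 * LL x t n - (0 + sum_list w))}
       = card {w\<in>coin_seqs n. Qp a b (0 + sum_list w)}"
    by (rule reflection) (use LL_pos in \<open>auto simp: Qp_def\<close>)
  then show ?thesis unfolding num_eq by simp
qed

lemma Q1_iff: "Qp a b s \<longleftrightarrow> real_of_int s / sqrt (real n) + 0 \<in> Aset x (sqrt t) a b"
proof -
  have eq: "x + sqrt t / sqrt (real n) * of_int s = x + sqrt t * (real_of_int s / sqrt (real n) + 0)" by simp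
  show ?thesis unfolding Qp_def Aset_def mem_Collect_eq pos_iff[symmetric] eq ..
qed

lemma Q2_iff: "Qp a b (-2 * LL x t n - s) \<longleftrightarrow> real_of_int s / sqrt (real n) + ee x t n \<in> Aset (-x) (- sqrt t) a b"
proof -
  have eq: "x + sqrt t / sqrt (real n) * of_int (-2 * LL x t n - s) = -x + - sqrt t * (real_of_int s / sqrt (real n) + ee x t n)"
    using t n by (simp add: ee_def field_simps)
  show ?thesis unfolding Qp_def Aset_def mem_Collect_eq pos_iff[symmetric] eq ..
qed

lemma FF_eq: "FF x t n a b = real (card {w\<in>A_set x t n. a \<le> ereal (walk x t n w n) \<and> ereal (walk x t n w n) \<le> b}) / 2 ^ n"
proof -
  have "{w\<in>coin_seqs n. real_of_int (sum_list w) / sqrt (real n) + 0 \<in> Aset x (sqrt t) a b}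
      = {w\<in>coin_seqs n. Qp a b (sum_list w)}" by (simp only: Q1_iff)
  moreover have "{w\<in>coin_seqs n. real_of_int (sum_list w) / sqrt (real n) + ee x t n \<in> Aset (-x) (- sqrt t) a b}
      = {w\<in>coin_seqs n. Qp a b (-2 * LL x t n - sum_list w)}" by (simp only: Q2_iff)
  ultimately show ?thesis
    unfolding FF_def card_num measure_nu[OF Aset_borel] diff_divide_distrib by simp
qed

lemma A_card: "{w\<in>A_set x t n. 0 \<le> ereal (walk x t n w n) \<and> ereal (walk x t n w n) \<le> \<infinity>} = A_set x t n"
proof -
  have "w \<in> A_set x t n \<Longrightarrow> walk x t n w n > 0" for w using n unfolding A_set_def by auto
  then show ?thesis by force
qed

lemma Pn_FF: "Pn x t n a b = FF x t n a b / FF x t n 0 \<infinity>"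
  unfolding FF_eq Pn_def A_card by simp

end


lemma ee_bound:
  assumes x: "x > 0" and t: "t > 0" and n: "n \<ge> 1"
  shows "\<bar>ee x t n\<bar> \<le> 2 / sqrt (real n)"
proof -
  define c where "c = x * sqrt (real n) / sqrt t"
  have L: "c \<le> of_int (LL x t n)" "of_int (LL x t n) < c + 1"
    unfolding LL_def c_def by (simp_all add: le_of_int_ceiling) linarith
  have "ee x t n = 2 * (of_int (LL x t n) - c) / sqrt (real n)"
    unfolding ee_def c_def using t n by (simp add: field_simps)
  then show ?thesis using L n by (simp add: divide_right_mono)
qed

lemma ee_lim:
  assumes x: "x > 0" and t: "t > 0"
  shows "(\<lambda>n. ee x t n) \<longlonglongrightarrow> 0"
proof (rule Lim_null_comparison)
  show "\<forall>\<^sub>F n in sequentially. norm (ee x t n) \<le> 2 / sqrt (real n)"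
    by (intro eventually_sequentiallyI[of 1]) (use ee_bound[OF x t] in auto)
  show "(\<lambda>n. 2 / sqrt (real n)) \<longlonglongrightarrow> 0" by real_asymp
qed

definition JJ :: "ereal \<Rightarrow> ereal \<Rightarrow> real set" where
  "JJ a b = {y. a \<le> ereal y \<and> ereal y \<le> b \<and> 0 < y}"

lemma JJ_borel: "JJ a b \<in> sets borel"
  unfolding JJ_def by measurable

lemma G_nd: "t > 0 \<Longrightarrow> G t x y = normal_density x (sqrt t) y"
  unfolding G_def normal_density_def by simp

lemma G_nd2: "t > 0 \<Longrightarrow> G t x (-y) = normal_density (-x) (sqrt t) y"
  unfolding G_def normal_density_def by (simp add: power2_eq_square algebra_simps)

lemma H_nd: "t > 0 \<Longrightarrow> H t x y = normal_density x (sqrt t) y - normal_density (-x) (sqrt t) y"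
  unfolding H_def using G_nd G_nd2 by simp

lemma lim_FF:
  assumes x: "x > 0" and t: "t > 0"
  shows "(\<lambda>n. FF x t n a b) \<longlonglongrightarrow> (LINT y:JJ a b|lborel. H t x y)"
proof -
  have st: "sqrt t > 0" using t by simp
  have l1: "(\<lambda>n. measure (nu n ((\<lambda>_. 0) n)) (Aset x (sqrt t) a b)) \<longlonglongrightarrow> measure std_normal_distribution (Aset x (sqrt t) a b)"
    by (rule weak_conv_imp_continuity_set_conv[OF real_distribution_nu real_dist_normal_dist weak_conv_nu Aset_borel Aset_frontier])
       (use st in auto)
  have l2: "(\<lambda>n. measure (nu n (ee x t n)) (Aset (-x) (- sqrt t) a b)) \<longlonglongrightarrow> measure std_normal_distribution (Aset (-x) (- sqrt t) a b)"
    by (rule weak_conv_imp_continuity_set_conv[OF real_distribution_nu real_dist_normal_dist weak_conv_nu Aset_borel Aset_frontier])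
       (use st ee_lim[OF x t] in auto)
  have m1: "measure std_normal_distribution (Aset x (sqrt t) a b) = (LINT y:JJ a b|lborel. normal_density x (sqrt t) y)"
  proof -
    have "Aset x (sqrt t) a b = {z. x + sqrt t * z \<in> JJ a b}" unfolding Aset_def JJ_def by auto
    then show ?thesis using std_aff[of "sqrt t" "JJ a b" x] st JJ_borel by simp
  qed
  have m2: "measure std_normal_distribution (Aset (-x) (- sqrt t) a b) = (LINT y:JJ a b|lborel. normal_density (-x) (sqrt t) y)"
  proof -
    have "Aset (-x) (- sqrt t) a b = {z. -x + - sqrt t * z \<in> JJ a b}" unfolding Aset_def JJ_def by auto
    then show ?thesis using std_aff[of "- sqrt t" "JJ a b" "-x"] st JJ_borel by simp
  qed
  have si: "set_integrable lborel (JJ a b) (normal_density u (sqrt t))" for u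
    unfolding set_integrable_def using JJ_borel st
    by (intro integrable_mult_indicator) auto
  have "(LINT y:JJ a b|lborel. H t x y) = (LINT y:JJ a b|lborel. normal_density x (sqrt t) y)
      - (LINT y:JJ a b|lborel. normal_density (-x) (sqrt t) y)"
    unfolding H_nd[OF t] by (rule set_integral_diff(2)[OF si si])
  then show ?thesis using tendsto_diff[OF l1 l2] unfolding FF_def m1 m2 by simp
qed

lemma JJ_interval:
  assumes t: "t > 0" and a: "0 \<le> a" and ab: "a < b"
  shows "(LINT y:JJ a b|lborel. H t x y) = (LBINT y=a..b. H t x y)"
proof -
  have Hm[measurable]: "H t x \<in> borel_measurable borel"
    unfolding H_nd[OF t, abs_def] by measurable
  have "AE y in lborel. y \<noteq> real_of_ereal a \<and> y \<noteq> real_of_ereal b \<and> y \<noteq> 0"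
    using AE_lborel_singleton[of "real_of_ereal a"] AE_lborel_singleton[of "real_of_ereal b"] AE_lborel_singleton[of 0]
    by eventually_elim auto
  then have ae: "AE y in lborel. y \<in> einterval a b \<longleftrightarrow> y \<in> JJ a b"
  proof (rule AE_mp, intro AE_I2 impI)
    fix y :: real assume y: "y \<noteq> real_of_ereal a \<and> y \<noteq> real_of_ereal b \<and> y \<noteq> 0"
    then have ya: "ereal y \<noteq> a" and yb: "ereal y \<noteq> b" by auto
    show "y \<in> einterval a b \<longleftrightarrow> y \<in> JJ a b"
    proof
      assume "y \<in> einterval a b"
      then have "a < ereal y" "ereal y < b" by (auto simp: einterval_def)
      moreover have "(0::ereal) < ereal y" using a \<open>a < ereal y\<close> by (rule le_less_trans)
      then have "0 < y" by simp
      ultimately show "y \<in> JJ a b" by (auto simp: JJ_def)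
    next
      assume "y \<in> JJ a b"
      then show "y \<in> einterval a b" using ya yb by (auto simp: JJ_def einterval_def)
    qed
  qed
  have "(LBINT y=a..b. H t x y) = (LINT y:einterval a b|lborel. H t x y)"
    using ab by (simp add: interval_lebesgue_integral_def less_imp_le)
  also have "\<dots> = (LINT y:JJ a b|lborel. H t x y)"
    by (rule set_integral_cong_set)
       (use ae JJ_borel in \<open>auto simp: set_borel_measurable_def\<close>)
  finally show ?thesis ..
qed

lemma H_pos:
  assumes x: "x > 0" and t: "t > 0" and y: "y > 0"
  shows "H t x y > 0"
proof -
  have "(y - x)^2 < (-y - x)^2" using x y by (simp add: power2_eq_square algebra_simps)
  then have "- ((-y - x)^2) / (2 * t) < - ((y - x)^2) / (2 * t)" using t by (simp add: divide_strict_right_mono)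
  then have "exp (- ((-y - x)^2) / (2 * t)) < exp (- ((y - x)^2) / (2 * t))" by simp
  moreover have "1 / sqrt (2 * pi * t) > 0" using t by simp
  ultimately have "1 / sqrt (2 * pi * t) * exp (- ((-y - x)^2) / (2 * t)) < 1 / sqrt (2 * pi * t) * exp (- ((y - x)^2) / (2 * t))"
    by (intro mult_strict_left_mono)
  then show ?thesis unfolding H_def G_def by linarith
qed

lemma denom_pos:
  assumes x: "x > 0" and t: "t > 0"
  shows "(LINT y:JJ 0 \<infinity>|lborel. H t x y) > 0"
proof -
  have st: "sqrt t > 0" using t by simp
  let ?J = "JJ 0 \<infinity>"
  have J: "?J = {0<..}" by (auto simp: JJ_def)
  have si: "set_integrable lborel ?J (normal_density u (sqrt t))" for u
    unfolding set_integrable_def using JJ_borel st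
    by (intro integrable_mult_indicator) auto
  have "set_integrable lborel ?J (\<lambda>y. normal_density x (sqrt t) y - normal_density (-x) (sqrt t) y)"
    by (rule set_integral_diff(1)[OF si si])
  then have int: "integrable lborel (\<lambda>y. indicator ?J y * H t x y)"
    unfolding set_integrable_def H_nd[OF t] by simp
  have nn: "AE y in lborel. 0 \<le> indicator ?J y * H t x y"
    by (intro AE_I2) (auto simp: J split: split_indicator intro: less_imp_le H_pos[OF x t])
  have ge: "(LINT y:?J|lborel. H t x y) \<ge> 0"
    unfolding set_lebesgue_integral_def using nn by (simp add: integral_nonneg_AE)
  moreover have "(LINT y:?J|lborel. H t x y) \<noteq> 0"
  proof
    assume "(LINT y:?J|lborel. H t x y) = 0"
    then have "integral\<^sup>L lborel (\<lambda>y. indicator ?J y * H t x y) = 0"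
      unfolding set_lebesgue_integral_def by simp
    then have "AE y in lborel. indicator ?J y * H t x y = 0"
      using integral_nonneg_eq_0_iff_AE[OF int nn] by simp
    then have "AE y in lborel. y \<notin> {0<..<1::real}"
      by (rule AE_mp) (auto intro!: AE_I2 simp: J split: split_indicator dest: H_pos[OF x t])
    then have "emeasure lborel {0<..<1::real} = 0"
      by (subst (asm) AE_iff_measurable[of "{0<..<1}"]) auto
    then show False by simp
  qed
  ultimately show ?thesis by simp
qed


theorem mainTheorem1:
  fixes x t :: real and a b :: ereal
  assumes "x > 0" and "t > 0" and "0 \<le> a" and "a < b"
  shows "(\<lambda>n. Pn x t n a b) \<longlonglongrightarrow>
           (LBINT y=a..b. H t x y) / (LBINT y=0..\<infinity>. H t x y)"
proof -
  have l1: "(\<lambda>n. FF x t n a b) \<longlonglongrightarrow> (LBINT y=a..b. H t x y)"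
    using lim_FF[OF assms(1,2), of a b] JJ_interval[OF assms(2,3,4), of x] by simp
  have l2: "(\<lambda>n. FF x t n 0 \<infinity>) \<longlonglongrightarrow> (LBINT y=0..\<infinity>. H t x y)"
    using lim_FF[OF assms(1,2), of 0 \<infinity>] JJ_interval[OF assms(2), of 0 \<infinity> x] by simp
  have nz: "(LBINT y=0..\<infinity>. H t x y) \<noteq> 0"
    using denom_pos[OF assms(1,2)] JJ_interval[OF assms(2), of 0 \<infinity> x] by simp
  have "(\<lambda>n. FF x t n a b / FF x t n 0 \<infinity>) \<longlonglongrightarrow> (LBINT y=a..b. H t x y) / (LBINT y=0..\<infinity>. H t x y)"
    by (rule tendsto_divide[OF l1 l2 nz])
  moreover have "\<forall>\<^sub>F n in sequentially. FF x t n a b / FF x t n 0 \<infinity> = Pn x t n a b"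
    by (intro eventually_sequentiallyI[of 1]) (use Pn_FF[OF assms(1,2)] in auto)
  ultimately show ?thesis by (rule Lim_transform_eventually)
qed

end
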